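(* Assume $192S\le T$. On the event $E$, for every arm $i$ and every integer $n\le 192S$, $n\,\widehat\mu_{i,n}<210c^2\log T$.
   Context: Bandit setup: $k$ arms, arm $i$ a distribution on $[0,1]$ with mean $\mu_i$, $\mu^*:=\max_i\mu_i>0$. $\log$ is the natural logarithm; $c:=3$; $T$ is the overall horizon and $S:=\frac{c^2\log T}{\mu^*}$. Canonical model: a $k\times T$ table $(Y_{i,s})$ of independent entries with $Y_{i,s}$ distributed as arm $i$, the $s$-th pull of arm $i$ yielding $Y_{i,s}$; $\widehat\mu_{i,s}:=\frac1s\sum_{r=1}^sY_{i,r}$ (and $n\widehat\mu_{i,n}:=0$ for $n=0$). Uniform sampling is modeled by independent uniform $U_1,\dots,U_T\in[k]$ (independent of the table). Events: $E_1$: for every integer $r$ with $128kS\le r\le T$ and every arm $i$, the number of $r'\le r$ with $U_{r'}=i$ is at least $\frac{r}{2k}$ and at most $\frac{3r}{2k}$. $E_2$: for every arm $i$ with $\mu_i>\frac{\mu^*}{64}$ and every integer $s$ with $64S\le s\le T$, $|\mu_i-\widehat\mu_{i,s}|\le c\sqrt{\frac{\mu_i\log T}{s}}$. $E_3$: for every arm $j$ with $\mu_j\le\frac{\mu^*}{64}$ and every integer $s$ with $64S\le s\le T$, $\widehat\mu_{j,s}<\frac{\mu^*}{32}$. $E:=E_1\cap E_2\cap E_3$. *)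

theory Defs
  imports Complex_Main
begin

text \<open>Arms are indexed by {1..k}; pulls and rounds by {1..T}.
  The reward table is Y i s (s-th pull of arm i), the uniform draws are U r.\<close>

definition cconst :: real where "cconst = 3"

definition mustar :: "nat \<Rightarrow> (nat \<Rightarrow> real) \<Rightarrow> real" where
  "mustar k \<mu> = Max (\<mu> ` {1..k})"

definition Sval :: "nat \<Rightarrow> (nat \<Rightarrow> real) \<Rightarrow> nat \<Rightarrow> real" where
  "Sval k \<mu> T = cconst\<^sup>2 * ln (real T) / mustar k \<mu>"

text \<open>Empirical mean of the first s pulls of arm i (equals 0 for s = 0, so s * muhat = 0).\<close>
definition muhat :: "(nat \<Rightarrow> nat \<Rightarrow> real) \<Rightarrow> nat \<Rightarrow> nat \<Rightarrow> real" where
  "muhat Y i s = (\<Sum>r=1..s. Y i r) / real s"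

definition E1 :: "nat \<Rightarrow> (nat \<Rightarrow> real) \<Rightarrow> nat \<Rightarrow> (nat \<Rightarrow> nat) \<Rightarrow> bool" where
  "E1 k \<mu> T U \<longleftrightarrow>
     (\<forall>r::nat. 128 * real k * Sval k \<mu> T \<le> real r \<and> r \<le> T \<longrightarrow>
        (\<forall>i\<in>{1..k}. real r / (2 * real k) \<le> real (card {r'\<in>{1..r}. U r' = i}) \<and>
                     real (card {r'\<in>{1..r}. U r' = i}) \<le> 3 * real r / (2 * real k)))"

definition E2 :: "nat \<Rightarrow> (nat \<Rightarrow> real) \<Rightarrow> nat \<Rightarrow> (nat \<Rightarrow> nat \<Rightarrow> real) \<Rightarrow> bool" where
  "E2 k \<mu> T Y \<longleftrightarrow>
     (\<forall>i\<in>{1..k}. \<mu> i > mustar k \<mu> / 64 \<longrightarrow>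
        (\<forall>s::nat. 64 * Sval k \<mu> T \<le> real s \<and> s \<le> T \<longrightarrow>
           \<bar>\<mu> i - muhat Y i s\<bar> \<le> cconst * sqrt (\<mu> i * ln (real T) / real s)))"

definition E3 :: "nat \<Rightarrow> (nat \<Rightarrow> real) \<Rightarrow> nat \<Rightarrow> (nat \<Rightarrow> nat \<Rightarrow> real) \<Rightarrow> bool" where
  "E3 k \<mu> T Y \<longleftrightarrow>
     (\<forall>j\<in>{1..k}. \<mu> j \<le> mustar k \<mu> / 64 \<longrightarrow>
        (\<forall>s::nat. 64 * Sval k \<mu> T \<le> real s \<and> s \<le> T \<longrightarrow>
           muhat Y j s < mustar k \<mu> / 32))"

definition Eevent where
  "Eevent k \<mu> T U Y \<longleftrightarrow> E1 k \<mu> T U \<and> E2 k \<mu> T Y \<and> E3 k \<mu> T Y"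

end

theory Submission
  imports Defs
begin

theorem lemma6:
  fixes k T :: nat and \<mu> :: "nat \<Rightarrow> real"
    and Y :: "nat \<Rightarrow> nat \<Rightarrow> real" and U :: "nat \<Rightarrow> nat"
  assumes k: "k \<ge> 1"
    and T: "T \<ge> 2"
    and mu_range: "\<And>i. i \<in> {1..k} \<Longrightarrow> 0 \<le> \<mu> i \<and> \<mu> i \<le> 1"
    and mustar_pos: "mustar k \<mu> > 0"
    and Y_range: "\<And>i s. i \<in> {1..k} \<Longrightarrow> s \<in> {1..T} \<Longrightarrow> 0 \<le> Y i s \<and> Y i s \<le> 1"
    and U_range: "\<And>r. r \<in> {1..T} \<Longrightarrow> U r \<in> {1..k}"
    and horizon: "192 * Sval k \<mu> T \<le> real T"
    and E: "Eevent k \<mu> T U Y"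
  shows "\<forall>i\<in>{1..k}. \<forall>n::nat. real n \<le> 192 * Sval k \<mu> T \<longrightarrow>
           real n * muhat Y i n < 210 * cconst\<^sup>2 * ln (real T)"
proof (intro ballI allI impI)
  fix i n assume i: "i \<in> {1..k}" and n: "real n \<le> 192 * Sval k \<mu> T"
  define M where "M = mustar k \<mu>"
  define L where "L = cconst\<^sup>2 * ln (real T)"
  define S where "S = Sval k \<mu> T"
  have S_def': "S = L / M" unfolding S_def L_def M_def Sval_def by simp
  have M0: "M > 0" using mustar_pos M_def by simp
  have fin: "finite (\<mu> ` {1..k})" "\<mu> ` {1..k} \<noteq> {}" using k by auto
  have M1: "M \<le> 1" unfolding M_def mustar_def using fin mu_range by (auto simp: Max_le_iff)
  have muM: "\<mu> i \<le> M" unfolding M_def mustar_def using fin i by (auto intro: Max_ge)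
  have mu0: "0 \<le> \<mu> i" using mu_range i by auto
  have lnT: "ln (real T) \<ge> ln 2" using T by simp
  have ln2: "ln (2::real) \<ge> 1/2"
    using ln_le_minus_one[of "1/2::real"] by (simp add: ln_div)
  have Lpos: "L \<ge> 9/2" unfolding L_def cconst_def using lnT ln2 by simp
  have S45: "S \<ge> 9/2"
  proof -
    have "L / M \<ge> L" using M0 M1 Lpos by (simp add: le_divide_eq mult_left_le)
    thus ?thesis using S_def' Lpos by linarith
  qed
  define N where "N = nat (floor (192 * S))"
  have "\<lfloor>192 * S\<rfloor> \<le> int T" using horizon S_def
    by (metis floor_mono floor_of_nat)
  hence NT: "N \<le> T" unfolding N_def by (simp add: nat_le_iff)
  have fl0: "\<lfloor>192 * S\<rfloor> \<ge> 0" using S45 by simp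
  have NR: "real N = real_of_int \<lfloor>192 * S\<rfloor>" unfolding N_def using fl0 by simp
  have N_le: "real N \<le> 192 * S" unfolding NR by (rule of_int_floor_le)
  have N_ge: "real N \<ge> 64 * S" unfolding NR
    using real_of_int_floor_add_one_gt[of "192 * S"] S45 by linarith
  have "int n \<le> \<lfloor>192 * S\<rfloor>" using n S_def by (simp add: le_floor_iff)
  hence nN: "n \<le> N" unfolding N_def by simp
  have Npos: "N > 0" using N_ge S45 by (cases N) auto
  have sumN: "real N * muhat Y i N = (\<Sum>r=1..N. Y i r)" using Npos unfolding muhat_def by simp
  have key: "real n * muhat Y i n \<le> real N * muhat Y i N"
  proof (cases "n = 0")
    case True
    have "0 \<le> (\<Sum>r=1..N. Y i r)" using Y_range i NT by (intro sum_nonneg) auto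
    thus ?thesis using True sumN by (simp add: muhat_def)
  next
    case False
    hence "real n * muhat Y i n = (\<Sum>r=1..n. Y i r)" unfolding muhat_def by simp
    also have "\<dots> \<le> (\<Sum>r=1..N. Y i r)"
      using Y_range i NT nN by (intro sum_mono2) auto
    finally show ?thesis using sumN by simp
  qed
  have LM: "S * M = L" using S_def' M0 by simp
  have "real N * muhat Y i N < 210 * L"
  proof (cases "\<mu> i > M / 64")
    case True
    have E2: "E2 k \<mu> T Y" using E Eevent_def by simp
    have b: "\<bar>\<mu> i - muhat Y i N\<bar> \<le> cconst * sqrt (\<mu> i * ln (real T) / real N)"
      using E2 True i N_ge NT unfolding E2_def M_def S_def by auto
    define q where "q = sqrt (\<mu> i * ln (real T) / real N)"
    have b': "muhat Y i N \<le> \<mu> i + cconst * q" using b q_def by (simp add: abs_le_iff)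
    have c1: "real N * muhat Y i N \<le> real N * (\<mu> i + cconst * q)"
      using b' by (rule mult_left_mono) simp
    have c2: "real N * (\<mu> i + cconst * q) = real N * \<mu> i + real N * (cconst * q)"
      by (simp add: distrib_left)
    have c3: "real N * (cconst * q) = sqrt (real N * \<mu> i * L)"
    proof -
      have e: "real N * \<mu> i * L = (real N * cconst)\<^sup>2 * (\<mu> i * ln (real T) / real N)"
        using Npos unfolding L_def by (simp add: power2_eq_square)
      have "sqrt (real N * \<mu> i * L) = sqrt ((real N * cconst)\<^sup>2) * q"
        unfolding e q_def by (rule real_sqrt_mult)
      moreover have "sqrt ((real N * cconst)\<^sup>2) = real N * cconst"
        by (simp only: real_sqrt_abs) (simp add: cconst_def)
      ultimately show ?thesis by simp
    qed
    have c4: "real N * \<mu> i \<le> 192 * L"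
    proof -
      have "real N * \<mu> i \<le> 192 * S * M" using N_le muM mu0 S45 M0
        by (intro mult_mono) auto
      thus ?thesis using LM by simp
    qed
    have c5: "sqrt (real N * \<mu> i * L) \<le> sqrt (192 * L * L)"
      using Lpos c4 by (intro real_sqrt_le_mono mult_right_mono) auto
    have c6: "sqrt (192 * L * L) = sqrt 192 * L" using Lpos
      by (simp add: real_sqrt_mult)
    have c7: "sqrt 192 * L < 14 * L"
    proof -
      have "sqrt 192 < (14::real)" by (rule real_less_lsqrt) auto
      thus ?thesis using Lpos by simp
    qed
    show ?thesis using c1 c2 c3 c4 c5 c6 c7 Lpos by linarith
  next
    case False
    have E3: "E3 k \<mu> T Y" using E Eevent_def by simp
    have b: "muhat Y i N < M / 32"
      using E3 False i N_ge NT unfolding E3_def M_def S_def by auto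
    have mh0: "muhat Y i N \<ge> 0" unfolding muhat_def using Y_range i NT
      by (intro divide_nonneg_nonneg sum_nonneg) auto
    have "real N * muhat Y i N \<le> 192 * S * muhat Y i N"
      using N_le mh0 by (rule mult_right_mono)
    also have "\<dots> \<le> 192 * S * (M / 32)" using b S45 by simp
    also have "\<dots> = 6 * L" using LM by (simp add: mult.commute)
    finally show ?thesis using Lpos by simp
  qed
  thus "real n * muhat Y i n < 210 * cconst\<^sup>2 * ln (real T)"
    using key L_def by simp
qed

end
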